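(* Let $m$ be a prime power and let $l,s,t$ be positive integers with $m\geq l-1$ and $2t-1\leq l$, and let $c\geq t$ be an integer with $l=c(t-1)+r$ for some $r\in\{t,\ldots,c\}$. Let $C$ be an $s$-ary $c$-frameproof code of length $l$ over an alphabet $S$ satisfying Property $P(t)$ with special element $\infty$, and put $T=S\setminus\{\infty\}$. Let $\alpha_1,\ldots,\alpha_l$ be distinct elements of $\mathbb{F}_m\cup\{\infty\}$. For a polynomial $f\in\mathbb{F}_m[X]$ let $f_\infty$ denote the coefficient of $X^{t-1}$ in $f$. For each codeword $B=(b_1,\ldots,b_l)\in C$ and each $f\in\mathbb{F}_m[X]$ with $\deg f\leq t-1$, define the word $w(B,f)$ of length $l$ over the alphabet $(T\times\mathbb{F}_m)\cup\{(\infty,\infty)\}$ whose $j$-th entry is $(\infty,\infty)$ if $b_j=\infty$; $(b_j,f_\infty)$ if $b_j\neq\infty$ and $\alpha_j=\infty$; and $(b_j,f(\alpha_j))$ otherwise. Let $C'$ be the set of all such words $w(B,f)$. Then $C'$ is a $c$-frameproof code satisfying Property $P(t)$ with special element $(\infty,\infty)$, and $C'\cup\{(\infty,\infty,\ldots,(\infty,\infty))\}$ (adjoining the word all of whose entries equal $(\infty,\infty)$) is still a $c$-frameproof code.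
   Context: Let $F$ be a finite alphabet and $l$ a positive integer. For $P\subseteq F^l$, $desc(P)=\{x\in F^l: \text{for every } i \text{ there is } y\in P \text{ with } x_i=y_i\}$. For an integer $c\geq 2$, a $c$-frameproof code is a subset $C\subseteq F^l$ with $desc(P)\cap C=P$ for every $P\subseteq C$ with $|P|\leq c$. A code is $s$-ary if its alphabet has size $s$. A $c$-frameproof code $C$ over an alphabet $S$ satisfies Property $P(t)$ if there is a special element $\infty\in S$ such that every codeword has at most $t-1$ coordinates equal to $\infty$ and every codeword is uniquely determined by specifying $t$ of its components not equal to $\infty$ (i.e., if $x,y\in C$ agree in $t$ coordinates where their common value is not $\infty$, then $x=y$). $\mathbb{F}_m$ denotes the finite field of order $m$. *)

theory Defs
  imports Main "HOL-Computational_Algebra.Polynomial"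
begin

text \<open>Words of length l are lists of length l; coordinates are indexed by 0..l-1.\<close>

definition is_code :: "'a set \<Rightarrow> nat \<Rightarrow> 'a list set \<Rightarrow> bool" where
  "is_code S l C \<longleftrightarrow> (\<forall>x\<in>C. length x = l \<and> set x \<subseteq> S)"

definition desc :: "nat \<Rightarrow> 'a list set \<Rightarrow> 'a list set" where
  "desc l P = {x. length x = l \<and> (\<forall>i<l. \<exists>y\<in>P. x ! i = y ! i)}"

definition frameproof :: "nat \<Rightarrow> nat \<Rightarrow> 'a list set \<Rightarrow> bool" where
  "frameproof c l C \<longleftrightarrow>
     (\<forall>P. P \<subseteq> C \<and> finite P \<and> card P \<le> c \<longrightarrow> desc l P \<inter> C = P)"

definition frameproof_code :: "nat \<Rightarrow> 'a set \<Rightarrow> nat \<Rightarrow> 'a list set \<Rightarrow> bool" where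
  "frameproof_code c S l C \<longleftrightarrow> is_code S l C \<and> frameproof c l C"

definition propP :: "nat \<Rightarrow> 'a set \<Rightarrow> nat \<Rightarrow> 'a \<Rightarrow> 'a list set \<Rightarrow> bool" where
  "propP t S l sp C \<longleftrightarrow> sp \<in> S \<and>
     (\<forall>x\<in>C. card {i. i < l \<and> x ! i = sp} \<le> t - 1) \<and>
     (\<forall>x\<in>C. \<forall>y\<in>C. \<forall>I. I \<subseteq> {..<l} \<and> card I = t \<and>
         (\<forall>i\<in>I. x ! i = y ! i \<and> x ! i \<noteq> sp) \<longrightarrow> x = y)"

text \<open>The construction: the element infinity of F_m \<union> {\<infinity>} is None; the new
  special symbol (\<infinity>,\<infinity>) is (sp, None).\<close>

definition cword :: "nat \<Rightarrow> nat \<Rightarrow> 'a \<Rightarrow> (nat \<Rightarrow> 'f::field option) \<Rightarrow> 'a list \<Rightarrow> 'f poly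
                      \<Rightarrow> ('a \<times> 'f option) list" where
  "cword t l sp alpha B f =
     map (\<lambda>j. if B ! j = sp then (sp, None)
              else (case alpha j of None \<Rightarrow> (B ! j, Some (coeff f (t - 1)))
                                  | Some a \<Rightarrow> (B ! j, Some (poly f a)))) [0..<l]"

definition ccode :: "nat \<Rightarrow> nat \<Rightarrow> 'a \<Rightarrow> (nat \<Rightarrow> 'f::field option) \<Rightarrow> 'a list set
                      \<Rightarrow> ('a \<times> 'f option) list set" where
  "ccode t l sp alpha C = {cword t l sp alpha B f | B f. B \<in> C \<and> degree f \<le> t - 1}"

end

theory Submission
  imports Defs
begin

lemma poly_eq_aux:
  fixes f g :: "'f::{finite,field} poly" and alpha :: "nat \<Rightarrow> 'f option"
  assumes df: "degree f \<le> t - 1" and dg: "degree g \<le> t - 1"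
    and cI: "card I = t" and tpos: "t > 0" and inj: "inj_on alpha I"
    and ag: "\<forall>i\<in>I. (case alpha i of None \<Rightarrow> coeff f (t-1) = coeff g (t-1)
                                      | Some a \<Rightarrow> poly f a = poly g a)"
  shows "f = g"
proof (rule ccontr)
  assume ne: "f \<noteq> g"
  define h where "h = f - g"
  have h0: "h \<noteq> 0" using ne h_def by simp
  have dh: "degree h \<le> t - 1" unfolding h_def using df dg degree_diff_le by blast
  have fI: "finite I" using cI tpos card.infinite by fastforce
  define J where "J = {i\<in>I. alpha i \<noteq> None}"
  define R where "R = (\<lambda>i. the (alpha i)) ` J"
  have injJ: "inj_on (\<lambda>i. the (alpha i)) J"
  proof (rule inj_onI)
    fix i j assume ij: "i \<in> J" "j \<in> J" "the (alpha i) = the (alpha j)"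
    hence "alpha i = alpha j" unfolding J_def by (cases "alpha i"; cases "alpha j") auto
    thus "i = j" using inj ij unfolding J_def inj_on_def by blast
  qed
  have cR: "card R = card J" unfolding R_def using injJ card_image by blast
  have Rroots: "R \<subseteq> {x. poly h x = 0}"
  proof
    fix x assume "x \<in> R"
    then obtain i where i: "i \<in> J" "x = the (alpha i)" unfolding R_def by auto
    then obtain a where a: "alpha i = Some a" unfolding J_def by auto
    have "i \<in> I" using i J_def by auto
    with ag a have "poly f a = poly g a" by force
    thus "x \<in> {x. poly h x = 0}" using i a h_def by simp
  qed
  have "card R \<le> card {x. poly h x = 0}"
    by (rule card_mono) (simp_all add: Rroots)
  also have "\<dots> \<le> degree h" using card_poly_roots_bound h0 by blast
  finally have cRd: "card R \<le> degree h" .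
  show False
  proof (cases "J = I")
    case True
    then show ?thesis using cR cI cRd dh tpos by simp
  next
    case False
    then obtain i0 where i0: "i0 \<in> I" "alpha i0 = None" unfolding J_def by auto
    have "coeff h (t-1) = 0" using ag i0 h_def by force
    hence "degree h \<noteq> t - 1" using h0 by (metis leading_coeff_0_iff)
    hence dlt: "degree h < t - 1" using dh by simp
    have "I - J \<subseteq> {i\<in>I. alpha i = None}" unfolding J_def by auto
    have "card (I - J) \<le> 1"
    proof -
      have "I - J \<subseteq> {i0}"
      proof
        fix i assume "i \<in> I - J"
        hence "i \<in> I" "alpha i = None" unfolding J_def by auto
        thus "i \<in> {i0}" using i0 inj unfolding inj_on_def by auto
      qed
      hence "card (I - J) \<le> card {i0}" by (intro card_mono) auto
      thus ?thesis by simp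
    qed
    moreover have "card I \<le> card J + card (I - J)"
    proof -
      have "card I \<le> card (J \<union> (I - J))" using fI by (intro card_mono) (auto simp: J_def)
      also have "\<dots> \<le> card J + card (I - J)" by (rule card_Un_le)
      finally show ?thesis .
    qed
    ultimately have "card J \<ge> t - 1" using cI by simp
    then show ?thesis using cR cRd dlt by simp
  qed
qed

lemma cword_len [simp]: "length (cword t l sp alpha B f) = l"
  by (simp add: cword_def)

lemma cword_nth:
  "i < l \<Longrightarrow> cword t l sp alpha B f ! i =
     (if B ! i = sp then (sp, None)
      else (B ! i, Some (case alpha i of None \<Rightarrow> coeff f (t-1) | Some a \<Rightarrow> poly f a)))"
  by (simp add: cword_def split: option.split)

lemma cover_count:
  assumes "finite P" "card P \<le> c" "x \<in> desc l P"
    and "\<forall>y\<in>P. card {i. i<l \<and> x!i = y!i \<and> x!i \<noteq> e} \<le> k"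
    and "card {i. i<l \<and> x!i = e} \<le> k"
  shows "l \<le> c * k + k"
proof -
  have "{..<l} \<subseteq> {i. i<l \<and> x!i = e} \<union> (\<Union>y\<in>P. {i. i<l \<and> x!i = y!i \<and> x!i \<noteq> e})"
    using assms(3) unfolding desc_def by auto
  hence "card {..<l} \<le> card ({i. i<l \<and> x!i = e} \<union> (\<Union>y\<in>P. {i. i<l \<and> x!i = y!i \<and> x!i \<noteq> e}))"
    by (rule card_mono[rotated]) (use assms(1) in auto)
  hence "l \<le> card ({i. i<l \<and> x!i = e} \<union> (\<Union>y\<in>P. {i. i<l \<and> x!i = y!i \<and> x!i \<noteq> e}))" by simp
  also have "\<dots> \<le> card {i. i<l \<and> x!i = e} + card (\<Union>y\<in>P. {i. i<l \<and> x!i = y!i \<and> x!i \<noteq> e})"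
    by (rule card_Un_le)
  also have "card (\<Union>y\<in>P. {i. i<l \<and> x!i = y!i \<and> x!i \<noteq> e}) \<le> (\<Sum>y\<in>P. card {i. i<l \<and> x!i = y!i \<and> x!i \<noteq> e})"
    by (rule card_UN_le[OF assms(1)])
  also have "\<dots> \<le> card P * k" using sum_bounded_above[of P _ k] assms(4) by simp
  also have "\<dots> \<le> c * k" using assms(2) by simp
  finally show ?thesis using assms(5) by simp
qed

lemma z_count:
  assumes "finite P" "card P \<le> c" "replicate l e \<in> desc l P"
    and "\<forall>y\<in>P. card {i. i<l \<and> y!i = e} \<le> k"
  shows "l \<le> c * k"
proof -
  have "{..<l} \<subseteq> (\<Union>y\<in>P. {i. i<l \<and> y!i = e})"
    using assms(3) unfolding desc_def by auto
  hence "card {..<l} \<le> card (\<Union>y\<in>P. {i. i<l \<and> y!i = e})"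
    by (rule card_mono[rotated]) (use assms(1) in auto)
  hence "l \<le> card (\<Union>y\<in>P. {i. i<l \<and> y!i = e})" by simp
  also have "\<dots> \<le> (\<Sum>y\<in>P. card {i. i<l \<and> y!i = e})"
    by (rule card_UN_le[OF assms(1)])
  also have "\<dots> \<le> card P * k" using sum_bounded_above[of P _ k] assms(4) by simp
  also have "\<dots> \<le> c * k" using assms(2) by simp
  finally show ?thesis .
qed

lemma fp_generic:
  assumes len: "\<forall>x\<in>D. length x = l"
    and K: "\<forall>x\<in>D. \<forall>y\<in>D. \<forall>I. I \<subseteq> {..<l} \<and> card I = t \<and> (\<forall>i\<in>I. x!i = y!i \<and> x!i \<noteq> e) \<longrightarrow> x = y"
    and sp: "\<forall>x\<in>D. card {i. i<l \<and> x!i = e} \<le> t - 1"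
    and big: "l \<ge> c * (t-1) + t" and tpos: "t > 0"
  shows "frameproof c l (insert (replicate l e) D)"
  unfolding frameproof_def
proof (intro allI impI)
  fix P assume P: "P \<subseteq> insert (replicate l e) D \<and> finite P \<and> card P \<le> c"
  let ?z = "replicate l e"
  have "P \<subseteq> desc l P"
  proof
    fix y assume "y \<in> P"
    moreover have "length y = l" using \<open>y \<in> P\<close> P len by auto
    ultimately show "y \<in> desc l P" unfolding desc_def by auto
  qed
  moreover have "x \<in> P" if x: "x \<in> desc l P" "x \<in> insert ?z D" for x
  proof (rule ccontr)
    assume xP: "x \<notin> P"
    show False
    proof (cases "x = ?z")
      case True
      have "\<forall>y\<in>P. card {i. i<l \<and> y!i = e} \<le> t - 1"
      proof
        fix y assume "y \<in> P"
        hence "y \<in> D" using P xP True by auto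
        thus "card {i. i<l \<and> y!i = e} \<le> t - 1" using sp by auto
      qed
      hence "l \<le> c * (t-1)" using z_count[of P c l e] P x True by auto
      thus False using big tpos by simp
    next
      case False
      hence xD: "x \<in> D" using x by auto
      have "\<forall>y\<in>P. card {i. i<l \<and> x!i = y!i \<and> x!i \<noteq> e} \<le> t - 1"
      proof
        fix y assume yP: "y \<in> P"
        show "card {i. i<l \<and> x!i = y!i \<and> x!i \<noteq> e} \<le> t - 1"
        proof (cases "y = ?z")
          case True
          hence E: "{i. i<l \<and> x!i = y!i \<and> x!i \<noteq> e} = {}" using True by auto
          show ?thesis by (subst E) simp
        next
          case False
          hence yD: "y \<in> D" using yP P by auto
          show ?thesis
          proof (rule ccontr)
            assume "\<not> ?thesis"
            hence "t \<le> card {i. i<l \<and> x!i = y!i \<and> x!i \<noteq> e}" by simp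
            then obtain I where I: "I \<subseteq> {i. i<l \<and> x!i = y!i \<and> x!i \<noteq> e}" "card I = t"
              by (meson obtain_subset_with_card_n)
            have K1: "\<forall>I. I \<subseteq> {..<l} \<and> card I = t \<and> (\<forall>i\<in>I. x!i = y!i \<and> x!i \<noteq> e) \<longrightarrow> x = y"
              using K xD yD by blast
            have "I \<subseteq> {..<l} \<and> card I = t \<and> (\<forall>i\<in>I. x!i = y!i \<and> x!i \<noteq> e)" using I by auto
            hence "x = y" using K1 by blast
            thus False using xP yP by simp
          qed
        qed
      qed
      hence "l \<le> c * (t-1) + (t-1)"
        using cover_count[of P c x l e "t-1"] P x sp xD by auto
      thus False using big tpos by simp
    qed
  qed
  ultimately show "desc l P \<inter> insert ?z D = P" using P by blast
qed

lemma fp_mono: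
  assumes "frameproof c l D'" "D \<subseteq> D'"
  shows "frameproof c l D"
  using assms unfolding frameproof_def by blast

theorem lemma2:
  fixes m l s t c r :: nat
    and S :: "'a set" and sp :: 'a and C :: "'a list set"
    and alpha :: "nat \<Rightarrow> 'f::{finite,field} option"
  assumes "m = card (UNIV :: 'f set)"
    and "l > 0" and "s > 0" and "t > 0"
    and "m \<ge> l - 1" and "2 * t - 1 \<le> l"
    and "c \<ge> 2" and "c \<ge> t"
    and "t \<le> r" and "r \<le> c" and "l = c * (t - 1) + r"
    and "finite S" and "card S = s"
    and "frameproof_code c S l C"
    and "propP t S l sp C"
    and "inj_on alpha {..<l}"
  shows "frameproof_code c (((S - {sp}) \<times> Some ` UNIV) \<union> {(sp, None)}) l
           (ccode t l sp alpha C)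
       \<and> propP t (((S - {sp}) \<times> Some ` UNIV) \<union> {(sp, None)}) l (sp, None)
           (ccode t l sp alpha C)
       \<and> frameproof_code c (((S - {sp}) \<times> Some ` UNIV) \<union> {(sp, None)}) l
           (insert (replicate l (sp, None)) (ccode t l sp alpha C))"
proof -
  let ?A = "((S - {sp}) \<times> Some ` UNIV) \<union> {(sp, None)}"
  let ?D = "ccode t l sp alpha C"
  let ?e = "(sp, None) :: 'a \<times> 'f option"
  have codeC: "\<forall>x\<in>C. length x = l \<and> set x \<subseteq> S"
    using assms(14) unfolding frameproof_code_def is_code_def by blast
  have PC1: "\<forall>x\<in>C. card {i. i < l \<and> x ! i = sp} \<le> t - 1"
    and PC2: "\<forall>x\<in>C. \<forall>y\<in>C. \<forall>I. I \<subseteq> {..<l} \<and> card I = t \<and>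
         (\<forall>i\<in>I. x ! i = y ! i \<and> x ! i \<noteq> sp) \<longrightarrow> x = y"
    using assms(15) unfolding propP_def by blast+
  have len: "\<forall>x\<in>?D. length x = l" unfolding ccode_def by auto
  have setD: "\<forall>x\<in>?D. set x \<subseteq> ?A"
  proof
    fix x assume "x \<in> ?D"
    then obtain B f where x: "x = cword t l sp alpha B f" "B \<in> C" unfolding ccode_def by auto
    show "set x \<subseteq> ?A"
    proof
      fix a assume "a \<in> set x"
      then obtain i where i: "i < l" "a = x ! i" using x by (auto simp: in_set_conv_nth)
      have "B ! i \<in> S" using codeC x i by (metis nth_mem subsetD)
      thus "a \<in> ?A" using i x by (auto simp: cword_nth)
    qed
  qed
  have spD: "\<forall>x\<in>?D. card {i. i<l \<and> x!i = ?e} \<le> t - 1"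
  proof
    fix x assume "x \<in> ?D"
    then obtain B f where x: "x = cword t l sp alpha B f" "B \<in> C" unfolding ccode_def by auto
    have "{i. i<l \<and> x!i = ?e} = {i. i<l \<and> B!i = sp}" using x by (auto simp: cword_nth split: if_splits)
    thus "card {i. i<l \<and> x!i = ?e} \<le> t - 1" using PC1 x by simp
  qed
  have K: "\<forall>x\<in>?D. \<forall>y\<in>?D. \<forall>I. I \<subseteq> {..<l} \<and> card I = t \<and> (\<forall>i\<in>I. x!i = y!i \<and> x!i \<noteq> ?e) \<longrightarrow> x = y"
  proof (intro ballI allI impI)
    fix x y I assume xD: "x \<in> ?D" and yD: "y \<in> ?D"
      and I: "I \<subseteq> {..<l} \<and> card I = t \<and> (\<forall>i\<in>I. x!i = y!i \<and> x!i \<noteq> ?e)"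
    obtain B f where x: "x = cword t l sp alpha B f" "B \<in> C" "degree f \<le> t - 1"
      using xD unfolding ccode_def by auto
    obtain B' f' where y: "y = cword t l sp alpha B' f'" "B' \<in> C" "degree f' \<le> t - 1"
      using yD unfolding ccode_def by auto
    have agr: "B!i = B'!i \<and> B!i \<noteq> sp \<and>
       (case alpha i of None \<Rightarrow> coeff f (t-1) = coeff f' (t-1) | Some a \<Rightarrow> poly f a = poly f' a)"
      if "i \<in> I" for i
    proof -
      have il: "i < l" using I that by auto
      have "x!i = y!i" "x!i \<noteq> ?e" using I that by auto
      thus ?thesis using x y il by (auto simp: cword_nth split: if_splits option.splits)
    qed
    have BB: "B = B'"
      apply (rule PC2[rule_format, OF x(2) y(2), of I])
      using I agr by blast
    have injI: "inj_on alpha I" using inj_on_subset[OF assms(16)] I by blast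
    have "f = f'"
      by (rule poly_eq_aux[OF x(3) y(3) _ assms(4) injI]) (use I agr in auto)
    thus "x = y" using x y BB by simp
  qed
  have big: "l \<ge> c * (t-1) + t" using assms(9,11) by simp
  have fpi: "frameproof c l (insert (replicate l ?e) ?D)"
    by (rule fp_generic[OF len K spD big assms(4)])
  have fp: "frameproof c l ?D" using fp_mono[OF fpi] by blast
  show ?thesis
  proof (intro conjI)
    show "frameproof_code c ?A l ?D"
      unfolding frameproof_code_def is_code_def using len setD fp by blast
    show "propP t ?A l ?e ?D" unfolding propP_def using spD K by blast
    show "frameproof_code c ?A l (insert (replicate l ?e) ?D)"
      unfolding frameproof_code_def is_code_def using len setD fpi by auto
  qed
qed

end
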